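(* Let $\mathbf A,\mathbf B$ be $\tau$-algebras. Then $\mathbf B\in\mathbb{HSP}(\mathbf A)$ if and only if the map $\varepsilon:\mathbf A^\uparrow\to\mathbf B^\uparrow$, $\varepsilon(t^{\mathbf A})=t^{\mathbf B}$ ($t$ a $\tau$-term over $V$), is a well-defined homomorphism of infinitary clone $\tau$-algebras.
   Context: $\tau$ is a set of $\omega$-ary operation symbols disjoint from $\{q\}\cup\{e_i:i\in\omega\}$; a $\tau$-algebra has operations $A^\omega\to A$. $\tau$-terms over $V=\{e_0,e_1,\dots\}$ are well-founded countably branching terms built by $f(t_0,t_1,\dots)$; term operations: $e_i^{\mathbf A}(s)=s_i$, $f(t_0,t_1,\dots)^{\mathbf A}(s)=f^{\mathbf A}(t_0^{\mathbf A}(s),t_1^{\mathbf A}(s),\dots)$. $\mathbb{HSP}(\mathbf A)$ is the class of algebras isomorphic to homomorphic images of subalgebras of arbitrary direct powers of $\mathbf A$. An infinitary clone $\tau$-algebra is an algebra with constants $e_i$ ($i\in\omega$), a constant $f$ for each $f\in\tau$, and an $\omega$-ary $q$ satisfying (N1) $q(e_i,x_0,x_1,\dots)=x_i$; (N2) $q(x,e_0,e_1,\dots)=x$; (N3) $q(q(x,y_0,y_1,\dots),\boldsymbol z)=q(x,q(y_0,\boldsymbol z),q(y_1,\boldsymbol z),\dots)$. $\mathbf A^\uparrow$ is the set $\{t^{\mathbf A}\}$ of term operations with $e_i(s)=s_i$, $q(g_0,g_1,\dots)(s)=g_0(g_1(s),g_2(s),\dots)$ and $f\mapsto f^{\mathbf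 A}$. *)

theory Defs
  imports "HOL-Library.FuncSet"
begin

datatype 'f trm = Var nat | Fn 'f "nat \<Rightarrow> 'f trm"

record ('a, 'f) alg =
  carrier :: "'a set"
  ops :: "'f \<Rightarrow> (nat \<Rightarrow> 'a) \<Rightarrow> 'a"

definition tau_alg :: "('a, 'f) alg \<Rightarrow> bool" where
  "tau_alg A \<longleftrightarrow> (\<forall>f s. s \<in> UNIV \<rightarrow> carrier A \<longrightarrow> ops A f s \<in> carrier A)"

primrec term_eval :: "('f \<Rightarrow> (nat \<Rightarrow> 'a) \<Rightarrow> 'a) \<Rightarrow> 'f trm \<Rightarrow> (nat \<Rightarrow> 'a) \<Rightarrow> 'a" where
  "term_eval F (Var i) s = s i"
| "term_eval F (Fn f ts) s = F f (\<lambda>i. term_eval F (ts i) s)"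

definition term_op :: "('a, 'f) alg \<Rightarrow> 'f trm \<Rightarrow> (nat \<Rightarrow> 'a) \<Rightarrow> 'a" where
  "term_op A t = restrict (term_eval (ops A) t) (UNIV \<rightarrow> carrier A)"

definition power_alg :: "'i set \<Rightarrow> ('a, 'f) alg \<Rightarrow> ('i \<Rightarrow> 'a, 'f) alg" where
  "power_alg I A = \<lparr> carrier = I \<rightarrow>\<^sub>E carrier A,
                     ops = (\<lambda>f s. \<lambda>i\<in>I. ops A f (\<lambda>n. s n i)) \<rparr>"

definition subuniverse :: "'a set \<Rightarrow> ('a, 'f) alg \<Rightarrow> bool" where
  "subuniverse S A \<longleftrightarrow> S \<subseteq> carrier A \<and>
     (\<forall>f s. s \<in> UNIV \<rightarrow> S \<longrightarrow> ops A f s \<in> S)"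

definition alg_hom :: "('a, 'f) alg \<Rightarrow> ('b, 'f) alg \<Rightarrow> ('a \<Rightarrow> 'b) \<Rightarrow> bool" where
  "alg_hom A B h \<longleftrightarrow> h \<in> carrier A \<rightarrow> carrier B \<and>
     (\<forall>f s. s \<in> UNIV \<rightarrow> carrier A \<longrightarrow> h (ops A f s) = ops B f (h \<circ> s))"

definition HSP_via :: "'i set \<Rightarrow> ('a, 'f) alg \<Rightarrow> ('b, 'f) alg \<Rightarrow> bool" where
  "HSP_via I A B \<longleftrightarrow> (\<exists>S h. subuniverse S (power_alg I A) \<and>
      alg_hom \<lparr> carrier = S, ops = ops (power_alg I A) \<rparr> B h \<and> h ` S = carrier B)"

record ('c, 'f) ica =
  ccarrier :: "'c set"
  proj :: "nat \<Rightarrow> 'c"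
  cst :: "'f \<Rightarrow> 'c"
  qop :: "'c \<Rightarrow> (nat \<Rightarrow> 'c) \<Rightarrow> 'c"

definition ica_hom :: "('c, 'f) ica \<Rightarrow> ('d, 'f) ica \<Rightarrow> ('c \<Rightarrow> 'd) \<Rightarrow> bool" where
  "ica_hom C D h \<longleftrightarrow> h \<in> ccarrier C \<rightarrow> ccarrier D \<and>
     (\<forall>i. h (proj C i) = proj D i) \<and>
     (\<forall>f. h (cst C f) = cst D f) \<and>
     (\<forall>x ys. x \<in> ccarrier C \<longrightarrow> ys \<in> UNIV \<rightarrow> ccarrier C \<longrightarrow>
            h (qop C x ys) = qop D (h x) (h \<circ> ys))"

definition clone_up :: "('a, 'f) alg \<Rightarrow> ((nat \<Rightarrow> 'a) \<Rightarrow> 'a, 'f) ica" where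
  "clone_up A = \<lparr> ccarrier = range (term_op A),
                  proj = (\<lambda>i. term_op A (Var i)),
                  cst = (\<lambda>f. restrict (ops A f) (UNIV \<rightarrow> carrier A)),
                  qop = (\<lambda>g gs. restrict (\<lambda>s. g (\<lambda>i. gs i s)) (UNIV \<rightarrow> carrier A)) \<rparr>"

definition eps_well_defined :: "('a, 'f) alg \<Rightarrow> ('b, 'f) alg \<Rightarrow> bool" where
  "eps_well_defined A B \<longleftrightarrow> (\<forall>t u. term_op A t = term_op A u \<longrightarrow> term_op B t = term_op B u)"

definition eps :: "('a, 'f) alg \<Rightarrow> ('b, 'f) alg \<Rightarrow> ((nat \<Rightarrow> 'a) \<Rightarrow> 'a) \<Rightarrow> ((nat \<Rightarrow> 'b) \<Rightarrow> 'b)" where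
  "eps A B g = term_op B (SOME t. g = term_op A t)"

end

theory Submission imports Defs "HOL-Library.Nat_Bijection" begin

primrec subst :: "(nat \<Rightarrow> 'f trm) \<Rightarrow> 'f trm \<Rightarrow> 'f trm" where
 "subst th (Var i) = th i" | "subst th (Fn f ts) = Fn f (\<lambda>i. subst th (ts i))"

lemma eval_subst: "term_eval F (subst th t) s = term_eval F t (\<lambda>i. term_eval F (th i) s)"
  by (induction t) auto

lemma eval_closed:
  assumes "\<forall>f s. s \<in> UNIV \<rightarrow> S \<longrightarrow> F f s \<in> S" "s \<in> UNIV \<rightarrow> S"
  shows "term_eval F t s \<in> S"
  using assms by (induction t) auto

lemma eval_closedA: "tau_alg A \<Longrightarrow> s \<in> UNIV \<rightarrow> carrier A \<Longrightarrow> term_eval (ops A) t s \<in> carrier A"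
  by (rule eval_closed) (auto simp: tau_alg_def)

lemma eval_power:
  assumes "s \<in> UNIV \<rightarrow> carrier (power_alg I A)"
  shows "term_eval (ops (power_alg I A)) t s = (\<lambda>i\<in>I. term_eval (ops A) t (\<lambda>n. s n i))"
proof (induction t)
  case (Var x)
  have "s x \<in> I \<rightarrow>\<^sub>E carrier A" using assms by (auto simp: power_alg_def)
  then show ?case by (auto simp: PiE_def extensional_def)
next
  case (Fn f ts)
  then show ?case by (auto simp: power_alg_def intro!: restrict_ext arg_cong[where f="ops A f"])
qed

lemma eval_hom:
  assumes "alg_hom C B h" "\<forall>f s. s \<in> UNIV \<rightarrow> carrier C \<longrightarrow> ops C f s \<in> carrier C"
    "s \<in> UNIV \<rightarrow> carrier C"
  shows "h (term_eval (ops C) t s) = term_eval (ops B) t (h \<circ> s)"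
proof (induction t)
  case (Fn f ts)
  have cl: "(\<lambda>i. term_eval (ops C) (ts i) s) \<in> UNIV \<rightarrow> carrier C"
    using eval_closed[OF assms(2,3)] by auto
  have "h (term_eval (ops C) (Fn f ts) s) = ops B f (h \<circ> (\<lambda>i. term_eval (ops C) (ts i) s))"
    using assms(1) cl by (simp add: alg_hom_def)
  also have "\<dots> = term_eval (ops B) (Fn f ts) (h \<circ> s)"
    using Fn by (simp add: o_def)
  finally show ?case .
qed simp

lemma term_op_eq: "term_op A t = term_op A u \<Longrightarrow> s \<in> UNIV \<rightarrow> carrier A \<Longrightarrow>
   term_eval (ops A) t s = term_eval (ops A) u s"
  unfolding term_op_def by (metis restrict_apply')

lemma HSP_wd:
  fixes I :: "'i set" and A :: "('a,'f) alg" and B :: "('b,'f) alg"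
  assumes "HSP_via I A B" "tau_alg A"
  shows "eps_well_defined A B"
  unfolding eps_well_defined_def
proof (intro allI impI)
  fix t u assume eq: "term_op A t = term_op A u"
  obtain S h where S: "subuniverse S (power_alg I A)"
    and h: "alg_hom \<lparr> carrier = S, ops = ops (power_alg I A) \<rparr> B h" and im: "h ` S = carrier B"
    using assms(1) unfolding HSP_via_def by blast
  let ?C = "\<lparr> carrier = S, ops = ops (power_alg I A) \<rparr> :: ('i \<Rightarrow> 'a, 'f) alg"
  show "term_op B t = term_op B u"
    unfolding term_op_def
  proof (rule restrict_ext)
    fix s' :: "nat \<Rightarrow> 'b" assume s': "s' \<in> UNIV \<rightarrow> carrier B"
    have "\<forall>n. \<exists>x\<in>S. h x = s' n" using s' im by (metis PiE UNIV_I imageE)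
    then obtain s :: "nat \<Rightarrow> 'i \<Rightarrow> 'a" where s: "\<And>n. s n \<in> S" "\<And>n. h (s n) = s' n" by metis
    have hs: "h \<circ> s = s'" using s by auto
    have cl: "\<forall>f s. s \<in> UNIV \<rightarrow> carrier ?C \<longrightarrow> ops ?C f s \<in> carrier ?C"
      using S by (simp add: subuniverse_def)
    have sC: "s \<in> UNIV \<rightarrow> carrier ?C" using s by simp
    have sP: "s \<in> UNIV \<rightarrow> carrier (power_alg I A)" using s S by (auto simp: subuniverse_def)
    have "term_eval (ops (power_alg I A)) t s = term_eval (ops (power_alg I A)) u s"
    proof -
      have "\<And>i. i \<in> I \<Longrightarrow> (\<lambda>n. s n i) \<in> UNIV \<rightarrow> carrier A"
        using sP by (auto simp: power_alg_def)
      then show ?thesis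
        using eval_power[OF sP] term_op_eq[OF eq] by (auto intro!: restrict_ext)
    qed
    then have "h (term_eval (ops ?C) t s) = h (term_eval (ops ?C) u s)" by simp
    then show "term_eval (ops B) t s' = term_eval (ops B) u s'"
      using eval_hom[OF h cl sC] hs by metis
  qed
qed

lemma eps_term: "eps_well_defined A B \<Longrightarrow> eps A B (term_op A t) = term_op B t"
  unfolding eps_def eps_well_defined_def by (metis (mono_tags) someI)

lemma cst_term: "term_op C (Fn f Var) = restrict (ops C f) (UNIV \<rightarrow> carrier C)"
    unfolding term_op_def by (rule restrict_ext) simp

lemma wd_hom:
  fixes A :: "('a,'f) alg" and B :: "('b,'f) alg"
  assumes wd: "eps_well_defined A B" and A: "tau_alg A" and B: "tau_alg B"
  shows "ica_hom (clone_up A) (clone_up B) (eps A B)"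
  unfolding ica_hom_def
proof (intro conjI allI impI)
  show "eps A B \<in> ccarrier (clone_up A) \<rightarrow> ccarrier (clone_up B)"
    using eps_term[OF wd] by (auto simp: clone_up_def)
  fix i show "eps A B (proj (clone_up A) i) = proj (clone_up B) i"
    using eps_term[OF wd] by (simp add: clone_up_def)
next
  fix f
  show "eps A B (cst (clone_up A) f) = cst (clone_up B) f"
    using eps_term[OF wd, of "Fn f Var"] by (simp add: clone_up_def cst_term)
next
  fix x and ys :: "nat \<Rightarrow> (nat \<Rightarrow> 'a) \<Rightarrow> 'a"
  assume x: "x \<in> ccarrier (clone_up A)" and ys: "ys \<in> UNIV \<rightarrow> ccarrier (clone_up A)"
  obtain t where t: "x = term_op A t" using x by (auto simp: clone_up_def)
  have "\<forall>i. \<exists>u. ys i = term_op A u" using ys by (auto simp: clone_up_def)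
  then obtain us where us: "\<And>i. ys i = term_op A (us i)" by metis
  have q: "qop (clone_up C) (term_op C t) (\<lambda>i. term_op C (us i)) = term_op C (subst us t)"
    if C: "tau_alg C" for C :: "('c,'f) alg"
    unfolding clone_up_def term_op_def
    by (auto intro!: restrict_ext simp: eval_subst eval_closedA[OF C])
  have "qop (clone_up A) x ys = term_op A (subst us t)"
  proof -
    have "ys = (\<lambda>i. term_op A (us i))" using us by auto
    then show ?thesis using q[OF A] t by simp
  qed
  moreover have "eps A B \<circ> ys = (\<lambda>i. term_op B (us i))"
    using us eps_term[OF wd] by auto
  ultimately show "eps A B (qop (clone_up A) x ys) = qop (clone_up B) (eps A B x) (eps A B \<circ> ys)"
    using q[OF B] t eps_term[OF wd] by simp
qed

definition gen :: "('b \<Rightarrow> 'a) set \<Rightarrow> ('a,'f) alg \<Rightarrow> 'f trm \<Rightarrow> (nat \<Rightarrow> 'b) \<Rightarrow> (('b \<Rightarrow> 'a) \<Rightarrow> 'a)" where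
  "gen I A t \<sigma> = (\<lambda>v\<in>I. term_eval (ops A) t (v \<circ> \<sigma>))"

lemma eval_rename: "term_eval F (subst (\<lambda>k. Var (r k)) t) s = term_eval F t (s \<circ> r)"
  by (simp add: eval_subst o_def)

lemma key:
  fixes A :: "('a,'f) alg" and B :: "('b,'f) alg"
  assumes wd: "eps_well_defined A B" and \<sigma>: "\<sigma> \<in> UNIV \<rightarrow> carrier B"
    and H: "\<forall>v\<in>carrier B \<rightarrow>\<^sub>E carrier A. term_eval (ops A) t (v \<circ> \<sigma>) = term_eval (ops A) u (v \<circ> \<sigma>)"
  shows "term_eval (ops B) t \<sigma> = term_eval (ops B) u \<sigma>"
proof -
  define rep where "rep i = (LEAST j. \<sigma> j = \<sigma> i)" for i
  have srep: "\<sigma> (rep i) = \<sigma> i" for i unfolding rep_def by (rule LeastI) (rule refl)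
  define th :: "nat \<Rightarrow> 'f trm" where "th i = Var (rep i)" for i
  have "term_op A (subst th t) = term_op A (subst th u)"
    unfolding term_op_def
  proof (rule restrict_ext)
    fix s :: "nat \<Rightarrow> 'a" assume s: "s \<in> UNIV \<rightarrow> carrier A"
    define v where "v = (\<lambda>b\<in>carrier B. if b \<in> range \<sigma> then s (LEAST j. \<sigma> j = b) else s 0)"
    have v: "v \<in> carrier B \<rightarrow>\<^sub>E carrier A" proof -
      have sA: "\<And>n. s n \<in> carrier A" using s by auto
      show ?thesis unfolding v_def restrict_PiE Pi_iff using sA by (simp only: if_distrib[of "\<lambda>x. x \<in> carrier A"] if_cancel) blast
    qed
    have vs: "v \<circ> \<sigma> = (\<lambda>i. s (rep i))" using \<sigma> unfolding v_def rep_def by (auto simp: fun_eq_iff)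
    have "term_eval (ops A) (subst th t) s = term_eval (ops A) t (v \<circ> \<sigma>)"
      by (simp add: eval_subst th_def vs)
    also have "\<dots> = term_eval (ops A) u (v \<circ> \<sigma>)" using H v by blast
    also have "\<dots> = term_eval (ops A) (subst th u) s"
      by (simp add: eval_subst th_def vs)
    finally show "term_eval (ops A) (subst th t) s = term_eval (ops A) (subst th u) s" .
  qed
  then have "term_op B (subst th t) = term_op B (subst th u)" using wd unfolding eps_well_defined_def by blast
  then have "term_eval (ops B) (subst th t) \<sigma> = term_eval (ops B) (subst th u) \<sigma>"
    by (rule term_op_eq) (rule \<sigma>)
  moreover have "(\<lambda>i. term_eval (ops B) (th i) \<sigma>) = \<sigma>" by (simp add: th_def srep fun_eq_iff)
  ultimately show ?thesis by (simp add: eval_subst)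
qed

lemma wdgen:
  fixes A :: "('a,'f) alg" and B :: "('b,'f) alg"
  assumes wd: "eps_well_defined A B" and \<sigma>: "\<sigma> \<in> UNIV \<rightarrow> carrier B" and \<rho>: "\<rho> \<in> UNIV \<rightarrow> carrier B"
    and eq: "gen (carrier B \<rightarrow>\<^sub>E carrier A) A t \<sigma> = gen (carrier B \<rightarrow>\<^sub>E carrier A) A u \<rho>"
  shows "term_eval (ops B) t \<sigma> = term_eval (ops B) u \<rho>"
proof -
  define \<tau> where "\<tau> k = (if even k then \<sigma> (k div 2) else \<rho> (k div 2))" for k
  have t1: "\<tau> \<circ> (\<lambda>k. 2*k) = \<sigma>" and t2: "\<tau> \<circ> (\<lambda>k. Suc (2*k)) = \<rho>" by (auto simp: \<tau>_def fun_eq_iff)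
  have \<tau>: "\<tau> \<in> UNIV \<rightarrow> carrier B" using \<sigma> \<rho> by (auto simp: \<tau>_def Pi_iff)
  have "term_eval (ops B) (subst (\<lambda>k. Var (2*k)) t) \<tau> = term_eval (ops B) (subst (\<lambda>k. Var (Suc (2*k))) u) \<tau>"
  proof (rule key[OF wd \<tau>], intro ballI)
    fix v assume v: "v \<in> carrier B \<rightarrow>\<^sub>E carrier A"
    have "term_eval (ops A) (subst (\<lambda>k. Var (2*k)) t) (v \<circ> \<tau>) = gen (carrier B \<rightarrow>\<^sub>E carrier A) A t \<sigma> v"
      using v by (simp add: eval_rename gen_def comp_assoc t1)
    also have "\<dots> = gen (carrier B \<rightarrow>\<^sub>E carrier A) A u \<rho> v" using eq by simp
    also have "\<dots> = term_eval (ops A) (subst (\<lambda>k. Var (Suc (2*k))) u) (v \<circ> \<tau>)"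
      using v by (simp add: eval_rename gen_def comp_assoc t2)
    finally show "term_eval (ops A) (subst (\<lambda>k. Var (2*k)) t) (v \<circ> \<tau>) = term_eval (ops A) (subst (\<lambda>k. Var (Suc (2*k))) u) (v \<circ> \<tau>)" .
  qed
  then show ?thesis by (simp add: eval_rename t1 t2)
qed

lemma gen_in:
  assumes "tau_alg A" "\<sigma> \<in> UNIV \<rightarrow> carrier B"
  shows "gen (carrier B \<rightarrow>\<^sub>E carrier A) A t \<sigma> \<in> (carrier B \<rightarrow>\<^sub>E carrier A) \<rightarrow>\<^sub>E carrier A"
  unfolding gen_def restrict_PiE
proof
  fix v assume "v \<in> carrier B \<rightarrow>\<^sub>E carrier A"
  then have "v \<circ> \<sigma> \<in> UNIV \<rightarrow> carrier A" using assms(2) by (auto simp: Pi_iff)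
  then show "term_eval (ops A) t (v \<circ> \<sigma>) \<in> carrier A" by (rule eval_closedA[OF assms(1)])
qed

lemma ops_gen:
  fixes \<sigma> :: "nat \<Rightarrow> nat \<Rightarrow> 'b"
  defines "\<tau> \<equiv> \<lambda>k. \<sigma> (fst (prod_decode k)) (snd (prod_decode k))"
  shows "ops (power_alg I A) f (\<lambda>n. gen I A (t n) (\<sigma> n))
         = gen I A (Fn f (\<lambda>n. subst (\<lambda>k. Var (prod_encode (n,k))) (t n))) \<tau>"
    and "\<tau> \<circ> (\<lambda>k. prod_encode (n,k)) = \<sigma> n"
proof -
  show e: "\<tau> \<circ> (\<lambda>k. prod_encode (n,k)) = \<sigma> n" for n
    by (simp add: \<tau>_def fun_eq_iff prod_encode_inverse)
  show "ops (power_alg I A) f (\<lambda>n. gen I A (t n) (\<sigma> n))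
         = gen I A (Fn f (\<lambda>n. subst (\<lambda>k. Var (prod_encode (n,k))) (t n))) \<tau>"
    unfolding power_alg_def gen_def
    by (auto intro!: restrict_ext simp: eval_rename comp_assoc e)
qed

lemma wd_HSP:
  fixes A :: "('a,'f) alg" and B :: "('b,'f) alg"
  assumes wd: "eps_well_defined A B" and A: "tau_alg A" and B: "tau_alg B"
  shows "HSP_via (carrier B \<rightarrow>\<^sub>E carrier A) A B"
proof -
  define I where "I = carrier B \<rightarrow>\<^sub>E carrier A"
  define S where "S = {gen I A t \<sigma> | t \<sigma>. \<sigma> \<in> UNIV \<rightarrow> carrier B}"
  define h where "h x = (let r = SOME r. snd r \<in> UNIV \<rightarrow> carrier B \<and> x = gen I A (fst r) (snd r)
                         in term_eval (ops B) (fst r) (snd r))" for x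
  have hgen: "h (gen I A t \<sigma>) = term_eval (ops B) t \<sigma>" if \<sigma>: "\<sigma> \<in> UNIV \<rightarrow> carrier B" for t \<sigma>
  proof -
    let ?P = "\<lambda>r. snd r \<in> UNIV \<rightarrow> carrier B \<and> gen I A t \<sigma> = gen I A (fst r) (snd r)"
    have "?P (t, \<sigma>)" using \<sigma> by simp
    then have P: "?P (SOME r. ?P r)" by (rule someI)
    show ?thesis unfolding h_def Let_def
      using wdgen[OF wd _ \<sigma>, of "snd (SOME r. ?P r)" "fst (SOME r. ?P r)" t] P by (simp add: I_def)
  qed
  have ops_S: "ops (power_alg I A) f s \<in> S \<and> h (ops (power_alg I A) f s) = ops B f (h \<circ> s)"
    if s: "s \<in> UNIV \<rightarrow> S" for f s
  proof -
    have "\<forall>n. \<exists>t \<sigma>. \<sigma> \<in> UNIV \<rightarrow> carrier B \<and> s n = gen I A t \<sigma>"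
    proof
      fix n have "s n \<in> S" using s by auto
      then show "\<exists>t \<sigma>. \<sigma> \<in> UNIV \<rightarrow> carrier B \<and> s n = gen I A t \<sigma>" unfolding S_def by blast
    qed
    then obtain t \<sigma> where ts: "\<And>n. \<sigma> n \<in> UNIV \<rightarrow> carrier B" "\<And>n. s n = gen I A (t n) (\<sigma> n)" by metis
    define \<tau> where "\<tau> = (\<lambda>k. \<sigma> (fst (prod_decode k)) (snd (prod_decode k)))"
    have sdef: "s = (\<lambda>n. gen I A (t n) (\<sigma> n))" using ts by auto
    have o: "ops (power_alg I A) f s = gen I A (Fn f (\<lambda>n. subst (\<lambda>k. Var (prod_encode (n,k))) (t n))) \<tau>"
      unfolding sdef \<tau>_def by (rule ops_gen(1))
    have e: "\<tau> \<circ> (\<lambda>k. prod_encode (n,k)) = \<sigma> n" for n unfolding \<tau>_def by (rule ops_gen(2))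
    have e2: "(\<lambda>x. \<tau> (prod_encode (n,x))) = \<sigma> n" for n using e[of n] by (simp add: o_def)
    have \<tau>: "\<tau> \<in> UNIV \<rightarrow> carrier B" using ts(1) by (auto simp: \<tau>_def Pi_iff)
    show ?thesis
    proof
      show "ops (power_alg I A) f s \<in> S" unfolding o S_def using \<tau> by blast
      show "h (ops (power_alg I A) f s) = ops B f (h \<circ> s)"
        unfolding o hgen[OF \<tau>] using ts by (simp add: eval_rename e2 hgen o_def)
    qed
  qed
  have "subuniverse S (power_alg I A)"
    unfolding subuniverse_def
  proof (intro conjI allI impI)
    show "S \<subseteq> carrier (power_alg I A)"
    proof
      fix x assume "x \<in> S"
      then obtain t \<sigma> where "\<sigma> \<in> UNIV \<rightarrow> carrier B" "x = gen I A t \<sigma>" unfolding S_def by blast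
      then show "x \<in> carrier (power_alg I A)"
        using gen_in[OF A, of \<sigma> B t] by (simp add: I_def power_alg_def)
    qed
  next
    fix f and s :: "nat \<Rightarrow> ('b \<Rightarrow> 'a) \<Rightarrow> 'a" assume "s \<in> UNIV \<rightarrow> S" then show "ops (power_alg I A) f s \<in> S" using ops_S by blast
  qed
  moreover have "alg_hom \<lparr> carrier = S, ops = ops (power_alg I A) \<rparr> B h"
    unfolding alg_hom_def
  proof (intro conjI allI impI)
    show "h \<in> carrier \<lparr>carrier = S, ops = ops (power_alg I A)\<rparr> \<rightarrow> carrier B"
      using hgen eval_closedA[OF B] by (auto simp: S_def)
  next
    fix f and s :: "nat \<Rightarrow> ('b \<Rightarrow> 'a) \<Rightarrow> 'a" assume "s \<in> UNIV \<rightarrow> carrier \<lparr>carrier = S, ops = ops (power_alg I A)\<rparr>"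
    then show "h (ops \<lparr>carrier = S, ops = ops (power_alg I A)\<rparr> f s) = ops B f (h \<circ> s)"
      using ops_S by simp
  qed
  moreover have "h ` S = carrier B"
  proof
    show "h ` S \<subseteq> carrier B" using hgen eval_closedA[OF B] by (auto simp: S_def)
    show "carrier B \<subseteq> h ` S"
    proof
      fix b assume b: "b \<in> carrier B"
      then have "(\<lambda>_. b) \<in> UNIV \<rightarrow> carrier B" by simp
      then have "gen I A (Var 0) (\<lambda>_. b) \<in> S" "h (gen I A (Var 0) (\<lambda>_. b)) = b"
        using hgen by (auto simp: S_def)
      then show "b \<in> h ` S" by (metis image_eqI)
    qed
  qed
  ultimately show ?thesis unfolding HSP_via_def I_def by blast
qed

theorem proposition8p1:
  fixes A :: "('a, 'f) alg" and B :: "('b, 'f) alg"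
  assumes "tau_alg A" and "tau_alg B"
  shows "((\<exists>I :: 'i set. HSP_via I A B) \<longrightarrow>
            eps_well_defined A B \<and> ica_hom (clone_up A) (clone_up B) (eps A B))
       \<and> (eps_well_defined A B \<and> ica_hom (clone_up A) (clone_up B) (eps A B) \<longrightarrow>
            (\<exists>I :: ('b \<Rightarrow> 'a) set. HSP_via I A B))"
  using HSP_wd wd_hom wd_HSP assms by blast

end
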